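(* For every $T>0$ there exist $\epsilon=\epsilon(T)>0$ and $c=c(T)>0$ such that for every dyadic $N\in2^{\mathbb N}$, $$\big|\{(t,x)\in[0,T]\times\mathbb T:\ |e^{it\Delta}\delta_N(x)|\ge\epsilon\sqrt N\}\big|\ge c,$$ where $|\cdot|$ is Lebesgue measure on $[0,T]\times\mathbb T$.
   Context: $\mathbb T=\mathbb R/2\pi\mathbb Z$; $e^{it\Delta}$ is the Fourier multiplier $e^{-itn^2}$ on $\mathbb T$. Fix a smooth even $\varphi:\mathbb R\to[0,\infty)$ with $\varphi=1$ on $[-1,1]$ and support in $[-\frac{11}{10},\frac{11}{10}]$; $\delta_N$ is the function on $\mathbb T$ with Fourier coefficients $\hat\delta_N(n)=\varphi(n/N)$, i.e. $\delta_N(x)=\frac1{2\pi}\sum_{n\in\mathbb Z}\varphi(n/N)e^{inx}$. *)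

theory Defs
  imports "HOL-Analysis.Analysis"
begin

definition smooth_real :: "(real \<Rightarrow> real) \<Rightarrow> bool" where
  "smooth_real f \<longleftrightarrow> (\<forall>k x. ((deriv ^^ k) f) differentiable (at x))"

definition admissible_cutoff :: "(real \<Rightarrow> real) \<Rightarrow> bool" where
  "admissible_cutoff \<phi> \<longleftrightarrow> smooth_real \<phi> \<and> (\<forall>x. \<phi> (-x) = \<phi> x) \<and> (\<forall>x. 0 \<le> \<phi> x)
     \<and> (\<forall>x. \<bar>x\<bar> \<le> 1 \<longrightarrow> \<phi> x = 1) \<and> (\<forall>x. \<bar>x\<bar> > 11/10 \<longrightarrow> \<phi> x = 0)"

text \<open>Free Schroedinger evolution of delta_N on the torus (parametrized by x in R, 2pi-periodic):
  e^{it Delta} delta_N (x) = (1/2pi) sum_n phi(n/N) e^{-itn^2} e^{inx}.\<close>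
definition schrod_delta :: "(real \<Rightarrow> real) \<Rightarrow> real \<Rightarrow> real \<Rightarrow> real \<Rightarrow> complex" where
  "schrod_delta \<phi> N t x =
     complex_of_real (1 / (2 * pi)) *
       (\<Sum>\<^sub>\<infinity> n::int. complex_of_real (\<phi> (of_int n / N)) *
           exp (\<i> * complex_of_real (of_int n * x - t * (of_int n)\<^sup>2)))"

end

theory Submission
  imports Defs
begin

lemma exp_int_integral:
  fixes k :: int and m :: nat
  shows "((\<lambda>x::real. exp (x *\<^sub>R (\<i> * of_int k))) has_integral
           (if k = 0 then complex_of_real (2*pi*m) else 0)) {0..2*pi*m}"
proof (cases "k = 0")
  case True
  then show ?thesis using has_integral_const_real[of "1::complex" 0 "2*pi*m"]
    by (simp add: content_real scaleR_conv_of_real)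
next
  case False
  define A where "A = \<i> * (of_int k :: complex)"
  have A0: "A \<noteq> 0" using False by (simp add: A_def)
  have "((\<lambda>x::real. exp (x *\<^sub>R A) * A) has_integral (exp ((2*pi*m) *\<^sub>R A) - exp (0 *\<^sub>R A))) {0..2*pi*m}"
    by (intro fundamental_theorem_of_calculus) (auto intro: exp_scaleR_has_vector_derivative_right)
  moreover have "exp ((2*pi*m) *\<^sub>R A) = 1"
  proof -
    have "(2*pi*m) *\<^sub>R A = (2 * of_int (k * int m) * pi) * \<i>"
      by (simp add: A_def scaleR_conv_of_real algebra_simps)
    then show ?thesis using exp_integer_2pi[of "of_int (k * int m)"] by simp
  qed
  ultimately have "((\<lambda>x::real. exp (x *\<^sub>R A) * A) has_integral 0) {0..2*pi*m}" by simp
  then have "((\<lambda>x::real. exp (x *\<^sub>R A) * A / A) has_integral 0 / A) {0..2*pi*m}"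
    by (rule has_integral_divide)
  then show ?thesis using A0 False by (simp add: A_def)
qed

definition Fint :: "real \<Rightarrow> int \<Rightarrow> complex" where
  "Fint T l = integral {0..T} (\<lambda>t. exp (- (\<i> * complex_of_real (of_int l * t))))"

lemma box_exp_integral:
  fixes k l :: int and T :: real
  shows "((\<lambda>p::real\<times>real. exp (\<i> * complex_of_real (of_int k * snd p - of_int l * fst p)))
     has_integral (if k = 0 then of_real (2*pi) * Fint T l else 0)) (cbox (0,0) (T, 2*pi))"
proof -
  let ?f = "\<lambda>p::real\<times>real. exp (\<i> * complex_of_real (of_int k * snd p - of_int l * fst p))"
  have cont: "continuous_on UNIV ?f"
    by (intro continuous_intros)
  then have int: "?f integrable_on cbox (0,0) (T, 2*pi)"
    by (meson continuous_on_subset integrable_continuous subset_UNIV)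
  have eq: "\<And>t x. ?f (t,x) = exp (- (\<i> * complex_of_real (of_int l * t))) * exp (x *\<^sub>R (\<i> * of_int k))"
    by (simp add: exp_add[symmetric] scaleR_conv_of_real algebra_simps)
  have inner: "\<And>t. integral (cbox 0 (2*pi)) (\<lambda>x. ?f (t,x)) =
      exp (- (\<i> * complex_of_real (of_int l * t))) * (if k = 0 then complex_of_real (2*pi) else 0)"
  proof -
    fix t
    have "((\<lambda>x::real. exp (x *\<^sub>R (\<i> * of_int k))) has_integral
           (if k = 0 then complex_of_real (2*pi) else 0)) {0..2*pi}"
      using exp_int_integral[of k 1] by (simp only: of_nat_1 mult_1_right)
    then have "((\<lambda>x. exp (- (\<i> * complex_of_real (of_int l * t))) * exp (x *\<^sub>R (\<i> * of_int k))) has_integral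
       exp (- (\<i> * complex_of_real (of_int l * t))) * (if k = 0 then complex_of_real (2*pi) else 0)) {0..2*pi}"
      by (rule has_integral_mult_right)
    then show "?thesis t" unfolding eq cbox_interval by (rule integral_unique)
  qed
  have "integral (cbox (0,0) (T, 2*pi)) ?f = integral (cbox 0 T) (\<lambda>t. integral (cbox 0 (2*pi)) (\<lambda>x. ?f (t,x)))"
    by (rule integral_prod_continuous) (rule continuous_on_subset[OF cont subset_UNIV])
  also have "\<dots> = (if k = 0 then of_real (2*pi) * Fint T l else 0)"
    unfolding inner Fint_def by (auto simp: integral_mult_left)
  finally have I: "integral (cbox (0,0) (T, 2*pi)) ?f = (if k = 0 then of_real (2*pi) * Fint T l else 0)" .
  show ?thesis using int unfolding has_integral_integral I .
qed

lemma Fint_period: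
  fixes l :: int and m :: nat
  shows "Fint (2*pi*m) l = (if l = 0 then complex_of_real (2*pi*m) else 0)"
proof -
  have "((\<lambda>x::real. exp (x *\<^sub>R (\<i> * of_int (-l)))) has_integral
           (if -l = 0 then complex_of_real (2*pi*m) else 0)) {0..2*pi*m}"
    by (rule exp_int_integral)
  moreover have "\<And>t. exp (t *\<^sub>R (\<i> * of_int (-l))) = exp (- (\<i> * complex_of_real (of_int l * t)))"
    by (simp add: scaleR_conv_of_real algebra_simps)
  ultimately show ?thesis unfolding Fint_def by (simp add: integral_unique)
qed

lemma Fint_zero: "T \<ge> 0 \<Longrightarrow> Fint T 0 = of_real T"
  unfolding Fint_def by (simp add: scaleR_conv_of_real)

lemma w_cnj_expand:
  fixes J :: "'j set" and c :: "'j \<Rightarrow> real" and k l :: "'j \<Rightarrow> int"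
  shows "(\<Sum>j\<in>J. complex_of_real (c j) * exp (\<i> * complex_of_real (of_int (k j) * x - of_int (l j) * t))) *
     cnj (\<Sum>j\<in>J. complex_of_real (c j) * exp (\<i> * complex_of_real (of_int (k j) * x - of_int (l j) * t)))
   = (\<Sum>i\<in>J. \<Sum>j\<in>J. complex_of_real (c i * c j) *
        exp (\<i> * complex_of_real (of_int (k i - k j) * x - of_int (l i - l j) * t)))"
proof -
  have pt: "\<And>i j. complex_of_real (c i) * exp (\<i> * complex_of_real (of_int (k i) * x - of_int (l i) * t)) *
     cnj (complex_of_real (c j) * exp (\<i> * complex_of_real (of_int (k j) * x - of_int (l j) * t))) =
     complex_of_real (c i * c j) *
        exp (\<i> * complex_of_real (of_int (k i - k j) * x - of_int (l i - l j) * t))"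
  proof -
    fix i j
    let ?a = "\<i> * complex_of_real (of_int (k i) * x - of_int (l i) * t)"
    let ?b = "\<i> * complex_of_real (of_int (k j) * x - of_int (l j) * t)"
    have "cnj (exp ?b) = exp (- ?b)" by (simp add: exp_cnj)
    then have "exp ?a * cnj (exp ?b) = exp (?a + - ?b)" by (simp add: exp_minus exp_diff divide_inverse)
    also have "?a + - ?b = \<i> * complex_of_real (of_int (k i - k j) * x - of_int (l i - l j) * t)"
      by (simp add: algebra_simps)
    finally have E: "exp ?a * cnj (exp ?b) = exp (\<i> * complex_of_real (of_int (k i - k j) * x - of_int (l i - l j) * t))" .
    have "complex_of_real (c i) * exp ?a * cnj (complex_of_real (c j) * exp ?b) =
      complex_of_real (c i) * complex_of_real (c j) * (exp ?a * cnj (exp ?b))"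
      by (simp only: complex_cnj_mult complex_cnj_complex_of_real mult_ac)
    then show "?thesis i j" unfolding E of_real_mult .
  qed
  show ?thesis unfolding cnj_sum sum_product by (rule sum.cong[OF refl], rule sum.cong[OF refl], rule pt)
qed

lemma w_integral:
  fixes J :: "'j set" and c :: "'j \<Rightarrow> real" and k l :: "'j \<Rightarrow> int" and T :: real
  assumes fin: "finite J"
  shows "((\<lambda>p::real\<times>real. (\<Sum>j\<in>J. complex_of_real (c j) * exp (\<i> * complex_of_real (of_int (k j) * snd p - of_int (l j) * fst p))) *
     cnj (\<Sum>j\<in>J. complex_of_real (c j) * exp (\<i> * complex_of_real (of_int (k j) * snd p - of_int (l j) * fst p))))
    has_integral (\<Sum>i\<in>J. \<Sum>j\<in>J. complex_of_real (c i * c j) *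
        (if k i = k j then of_real (2*pi) * Fint T (l i - l j) else 0))) (cbox (0,0) (T, 2*pi))"
proof -
  have "((\<lambda>p::real\<times>real. (\<Sum>i\<in>J. \<Sum>j\<in>J. complex_of_real (c i * c j) *
        exp (\<i> * complex_of_real (of_int (k i - k j) * snd p - of_int (l i - l j) * fst p))))
    has_integral (\<Sum>i\<in>J. \<Sum>j\<in>J. complex_of_real (c i * c j) *
        (if k i = k j then of_real (2*pi) * Fint T (l i - l j) else 0))) (cbox (0,0) (T, 2*pi))"
  proof (intro has_integral_sum fin)
    fix i j
    have "((\<lambda>p::real\<times>real. exp (\<i> * complex_of_real (of_int (k i - k j) * snd p - of_int (l i - l j) * fst p)))
     has_integral (if k i - k j = 0 then of_real (2*pi) * Fint T (l i - l j) else 0)) (cbox (0,0) (T, 2*pi))"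
      by (rule box_exp_integral)
    then show "((\<lambda>p::real\<times>real. complex_of_real (c i * c j) *
        exp (\<i> * complex_of_real (of_int (k i - k j) * snd p - of_int (l i - l j) * fst p)))
     has_integral complex_of_real (c i * c j) * (if k i = k j then of_real (2*pi) * Fint T (l i - l j) else 0)) (cbox (0,0) (T, 2*pi))"
      by (intro has_integral_mult_right) simp
  qed
  then show ?thesis by (simp only: w_cnj_expand)
qed

definition Sset :: "nat \<Rightarrow> int set" where
  "Sset k = {-(2*2^k)..2*2^k}"

definition cc :: "(real \<Rightarrow> real) \<Rightarrow> nat \<Rightarrow> int \<Rightarrow> real" where
  "cc \<phi> k n = \<phi> (of_int n / 2^k) / (2*pi)"

definition uu :: "(real \<Rightarrow> real) \<Rightarrow> nat \<Rightarrow> real \<Rightarrow> real \<Rightarrow> complex" where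
  "uu \<phi> k t x = (\<Sum>n\<in>Sset k. complex_of_real (cc \<phi> k n) *
      exp (\<i> * complex_of_real (of_int n * x - of_int (n^2) * t)))"

lemma finite_Sset[simp]: "finite (Sset k)" by (simp add: Sset_def)

lemma schrod_eq:
  assumes "admissible_cutoff \<phi>"
  shows "schrod_delta \<phi> (2^k) t x = uu \<phi> k t x"
proof -
  have z: "\<phi> (of_int n / 2^k) = 0" if "n \<notin> Sset k" for n
  proof -
    have "\<bar>n\<bar> > 2*2^k" using that by (auto simp: Sset_def)
    then have "\<bar>real_of_int n\<bar> > 2*2^k" using of_int_less_iff[of "2*2^k" "\<bar>n\<bar>", where 'a=real] by simp
    then have "\<bar>of_int n / (2^k::real)\<bar> > 2" by (simp add: abs_divide pos_less_divide_eq)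
    then have "11/10 < \<bar>of_int n / (2^k::real)\<bar>" by linarith
    moreover have h: "\<forall>x. \<bar>x\<bar> > 11/10 \<longrightarrow> \<phi> x = 0" using assms by (simp add: admissible_cutoff_def)
    ultimately show ?thesis by blast
  qed
  have "(\<Sum>\<^sub>\<infinity> n::int. complex_of_real (\<phi> (of_int n / 2^k)) *
           exp (\<i> * complex_of_real (of_int n * x - t * (of_int n)\<^sup>2)))
      = (\<Sum>n\<in>Sset k. complex_of_real (\<phi> (of_int n / 2^k)) *
           exp (\<i> * complex_of_real (of_int n * x - t * (of_int n)\<^sup>2)))"
    by (subst infsum_cong_neutral[where T = "Sset k" and g = "\<lambda>n. complex_of_real (\<phi> (of_int n / 2^k)) *
           exp (\<i> * complex_of_real (of_int n * x - t * (of_int n)\<^sup>2))"]) (auto simp: z)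
  then show ?thesis
    unfolding schrod_delta_def uu_def cc_def
    by (simp only: sum_distrib_left, intro sum.cong[OF refl]) (simp add: power2_eq_square mult.commute)
qed


lemma L2:
  assumes T: "T \<ge> 0"
  shows "((\<lambda>p::real\<times>real. (cmod (uu \<phi> k (fst p) (snd p)))^2) has_integral
     (T * (\<Sum>n\<in>Sset k. (\<phi> (of_int n / 2^k))^2) / (2*pi))) (cbox (0,0) (T, 2*pi))"
proof -
  let ?c = "cc \<phi> k"
  have I: "((\<lambda>p::real\<times>real. uu \<phi> k (fst p) (snd p) * cnj (uu \<phi> k (fst p) (snd p)))
    has_integral (\<Sum>i\<in>Sset k. \<Sum>j\<in>Sset k. complex_of_real (?c i * ?c j) *
        (if i = j then of_real (2*pi) * Fint T (i^2 - j^2) else 0))) (cbox (0,0) (T, 2*pi))"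
    using w_integral[of "Sset k" ?c "\<lambda>n. n" "\<lambda>n. n^2" T] unfolding uu_def by simp
  have V: "(\<Sum>i\<in>Sset k. \<Sum>j\<in>Sset k. complex_of_real (?c i * ?c j) *
        (if i = j then of_real (2*pi) * Fint T (i^2 - j^2) else 0))
     = (\<Sum>i\<in>Sset k. complex_of_real (?c i * ?c i * (2*pi) * T))"
  proof (rule sum.cong[OF refl])
    fix i assume i: "i \<in> Sset k"
    have "(\<Sum>j\<in>Sset k. complex_of_real (?c i * ?c j) *
        (if i = j then of_real (2*pi) * Fint T (i^2 - j^2) else 0))
      = (\<Sum>j\<in>Sset k. if i = j then complex_of_real (?c i * ?c i * (2*pi) * T) else 0)"
      by (rule sum.cong[OF refl]) (simp add: Fint_zero T)
    also have "\<dots> = complex_of_real (?c i * ?c i * (2*pi) * T)" using i by simp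
    finally show "(\<Sum>j\<in>Sset k. complex_of_real (?c i * ?c j) *
        (if i = j then of_real (2*pi) * Fint T (i^2 - j^2) else 0)) = complex_of_real (?c i * ?c i * (2*pi) * T)" .
  qed
  have "((\<lambda>p::real\<times>real. Re (uu \<phi> k (fst p) (snd p) * cnj (uu \<phi> k (fst p) (snd p))))
    has_integral Re (\<Sum>i\<in>Sset k. complex_of_real (?c i * ?c i * (2*pi) * T))) (cbox (0,0) (T, 2*pi))"
    using has_integral_Re[OF I] unfolding V .
  moreover have "\<And>z. Re (z * cnj z) = (cmod z)^2"
    by (metis Re_complex_of_real complex_norm_square)
  moreover have "Re (\<Sum>i\<in>Sset k. complex_of_real (?c i * ?c i * (2*pi) * T)) =
     T * (\<Sum>n\<in>Sset k. (\<phi> (of_int n / 2^k))^2) / (2*pi)"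
  proof -
    have "Re (\<Sum>i\<in>Sset k. complex_of_real (?c i * ?c i * (2*pi) * T)) = (\<Sum>i\<in>Sset k. ?c i * ?c i * (2*pi) * T)"
      by (simp add: Re_sum)
    also have "\<dots> = (\<Sum>n\<in>Sset k. T * (\<phi> (of_int n / 2^k))^2 / (2*pi))"
      by (rule sum.cong[OF refl]) (simp add: cc_def field_simps power2_eq_square)
    also have "\<dots> = T * (\<Sum>n\<in>Sset k. (\<phi> (of_int n / 2^k))^2) / (2*pi)"
      by (simp add: sum_divide_distrib sum_distrib_left)
    finally show ?thesis .
  qed
  ultimately show ?thesis by simp
qed


lemma sum_two_bound:
  fixes f :: "'a \<Rightarrow> real"
  assumes fin: "finite J" and nn: "\<And>r. 0 \<le> f r" and z: "\<And>r. r \<in> J \<Longrightarrow> r \<noteq> a \<Longrightarrow> r \<noteq> b \<Longrightarrow> f r = 0"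
  shows "sum f J \<le> f a + f b"
proof -
  have "sum f J = sum f (J \<inter> {a,b})"
    by (rule sum.mono_neutral_right) (use fin z in auto)
  also have "\<dots> \<le> sum f {a,b}"
    by (rule sum_mono2) (use nn in auto)
  also have "\<dots> \<le> f a + f b"
    using nn by (cases "a = b") auto
  finally show ?thesis .
qed

lemma quad_sol:
  fixes a b c d :: int
  assumes "a + b = c + d" "a^2 + b^2 = c^2 + d^2"
  shows "(c = a \<and> d = b) \<or> (c = b \<and> d = a)"
proof -
  have d: "d = a + b - c" using assms(1) by simp
  have "(c - a) * (c - b) = 0"
    using assms(2) unfolding d by (simp add: algebra_simps power2_eq_square)
  then show ?thesis using d by auto
qed

lemma uu_sq:
  "(uu \<phi> k t x)^2 = (\<Sum>q\<in>Sset k \<times> Sset k. complex_of_real (cc \<phi> k (fst q) * cc \<phi> k (snd q)) *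
      exp (\<i> * complex_of_real (of_int (fst q + snd q) * x - of_int ((fst q)^2 + (snd q)^2) * t)))"
proof -
  have pt: "\<And>i j. complex_of_real (cc \<phi> k i) * exp (\<i> * complex_of_real (of_int i * x - of_int (i^2) * t)) *
      (complex_of_real (cc \<phi> k j) * exp (\<i> * complex_of_real (of_int j * x - of_int (j^2) * t)))
     = complex_of_real (cc \<phi> k i * cc \<phi> k j) *
      exp (\<i> * complex_of_real (of_int (i + j) * x - of_int (i^2 + j^2) * t))"
  proof -
    fix i j
    have "exp (\<i> * complex_of_real (of_int i * x - of_int (i^2) * t)) * exp (\<i> * complex_of_real (of_int j * x - of_int (j^2) * t))
      = exp (\<i> * complex_of_real (of_int i * x - of_int (i^2) * t) + \<i> * complex_of_real (of_int j * x - of_int (j^2) * t))"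
      by (simp only: exp_add)
    also have "\<i> * complex_of_real (of_int i * x - of_int (i^2) * t) + \<i> * complex_of_real (of_int j * x - of_int (j^2) * t)
      = \<i> * complex_of_real (of_int (i + j) * x - of_int (i^2 + j^2) * t)"
      by (simp add: algebra_simps)
    finally have E: "exp (\<i> * complex_of_real (of_int i * x - of_int (i^2) * t)) * exp (\<i> * complex_of_real (of_int j * x - of_int (j^2) * t))
      = exp (\<i> * complex_of_real (of_int (i + j) * x - of_int (i^2 + j^2) * t))" .
    show "?thesis i j" unfolding E[symmetric] of_real_mult by (simp only: mult_ac)
  qed
  have "(uu \<phi> k t x)^2 = (\<Sum>i\<in>Sset k. \<Sum>j\<in>Sset k. complex_of_real (cc \<phi> k i * cc \<phi> k j) *
      exp (\<i> * complex_of_real (of_int (i + j) * x - of_int (i^2 + j^2) * t)))"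
    unfolding power2_eq_square[of "uu \<phi> k t x"] unfolding uu_def sum_product
    by (rule sum.cong[OF refl], rule sum.cong[OF refl], rule pt)
  also have "\<dots> = (\<Sum>q\<in>Sset k \<times> Sset k. complex_of_real (cc \<phi> k (fst q) * cc \<phi> k (snd q)) *
      exp (\<i> * complex_of_real (of_int (fst q + snd q) * x - of_int ((fst q)^2 + (snd q)^2) * t)))"
    by (simp add: sum.cartesian_product case_prod_beta)
  finally show ?thesis .
qed

lemma cc_nonneg: "(\<forall>x. 0 \<le> \<phi> x) \<Longrightarrow> 0 \<le> cc \<phi> k n"
  by (simp add: cc_def)

lemma L4:
  fixes M :: nat and \<phi> :: "real \<Rightarrow> real"
  assumes nn: "\<forall>x. 0 \<le> \<phi> x"
  shows "\<exists>R. ((\<lambda>p::real\<times>real. (cmod (uu \<phi> k (fst p) (snd p)))^4) has_integral R) (cbox (0,0) (2*pi*M, 2*pi))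
     \<and> R \<le> M * (\<Sum>n\<in>Sset k. (\<phi> (of_int n / 2^k))^2)^2 / (2*pi^2)"
proof -
  define J where "J = Sset k \<times> Sset k"
  define C where "C = (\<lambda>q::int\<times>int. cc \<phi> k (fst q) * cc \<phi> k (snd q))"
  define K where "K = (\<lambda>q::int\<times>int. fst q + snd q)"
  define L where "L = (\<lambda>q::int\<times>int. (fst q)^2 + (snd q)^2)"
  define A where "A = (\<Sum>n\<in>Sset k. (\<phi> (of_int n / 2^k))^2)"
  have finJ: "finite J" by (simp add: J_def)
  have Cnn: "\<And>q. 0 \<le> C q" unfolding C_def using cc_nonneg[OF nn] by (simp add: mult_nonneg_nonneg)
  have I: "((\<lambda>p::real\<times>real. (uu \<phi> k (fst p) (snd p))^2 * cnj ((uu \<phi> k (fst p) (snd p))^2))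
    has_integral (\<Sum>i\<in>J. \<Sum>j\<in>J. complex_of_real (C i * C j) *
        (if K i = K j then of_real (2*pi) * Fint (2*pi*M) (L i - L j) else 0))) (cbox (0,0) (2*pi*M, 2*pi))"
    using w_integral[of J C K L "2*pi*M"] finJ unfolding uu_sq J_def C_def K_def L_def by simp
  define Z where "Z = (\<Sum>i\<in>J. \<Sum>j\<in>J. if K i = K j \<and> L i = L j then C i * C j else 0)"
  have V: "(\<Sum>i\<in>J. \<Sum>j\<in>J. complex_of_real (C i * C j) *
        (if K i = K j then of_real (2*pi) * Fint (2*pi*M) (L i - L j) else 0)) = complex_of_real (4*pi^2*M * Z)"
  proof -
    have "(\<Sum>i\<in>J. \<Sum>j\<in>J. complex_of_real (C i * C j) *
        (if K i = K j then of_real (2*pi) * Fint (2*pi*M) (L i - L j) else 0)) =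
       (\<Sum>i\<in>J. \<Sum>j\<in>J. complex_of_real (4*pi^2*M * (if K i = K j \<and> L i = L j then C i * C j else 0)))"
      by (rule sum.cong[OF refl], rule sum.cong[OF refl]) (auto simp: Fint_period power2_eq_square)
    also have "\<dots> = complex_of_real (4*pi^2*M * Z)"
      unfolding Z_def sum_distrib_left of_real_sum ..
    finally show ?thesis .
  qed
  have I2: "((\<lambda>p::real\<times>real. (cmod (uu \<phi> k (fst p) (snd p)))^4) has_integral (4*pi^2*M * Z)) (cbox (0,0) (2*pi*M, 2*pi))"
  proof -
    have "\<And>z. Re (z * cnj z) = (cmod z)^2"
      by (metis Re_complex_of_real complex_norm_square)
    moreover have "\<And>z::complex. (cmod (z^2))^2 = (cmod z)^4" by (simp add: norm_power flip: power_mult)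
    ultimately have h: "\<And>z::complex. Re (z^2 * cnj (z^2)) = (cmod z)^4" by metis
    show ?thesis using has_integral_Re[OF I] unfolding V h Re_complex_of_real .
  qed
  have Zb: "Z \<le> (\<Sum>i\<in>J. 2 * (C i * C i))"
    unfolding Z_def
  proof (rule sum_mono)
    fix i assume i: "i \<in> J"
    let ?f = "\<lambda>j. if K i = K j \<and> L i = L j then C i * C j else 0"
    have "sum ?f J \<le> ?f i + ?f (snd i, fst i)"
    proof (rule sum_two_bound[OF finJ])
      show "\<And>r. 0 \<le> ?f r" using Cnn by (simp add: mult_nonneg_nonneg)
      fix r assume "r \<in> J" "r \<noteq> i" "r \<noteq> (snd i, fst i)"
      then show "?f r = 0"
        using quad_sol[of "fst i" "snd i" "fst r" "snd r"] unfolding K_def L_def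
        by (cases i, cases r) auto
    qed
    also have "\<dots> \<le> 2 * (C i * C i)"
      using Cnn[of i] by (simp add: C_def K_def L_def mult.commute)
    finally show "sum ?f J \<le> 2 * (C i * C i)" .
  qed
  have SC: "(\<Sum>i\<in>J. C i * C i) = (\<Sum>n\<in>Sset k. cc \<phi> k n * cc \<phi> k n)^2"
    unfolding J_def C_def power2_eq_square sum_product
    by (simp add: sum.cartesian_product case_prod_beta mult_ac)
  have Sc: "(\<Sum>n\<in>Sset k. cc \<phi> k n * cc \<phi> k n) = A / (4*pi^2)"
    unfolding A_def cc_def by (simp add: sum_divide_distrib power2_eq_square)
  have "4*pi^2*M * Z \<le> 4*pi^2*M * (\<Sum>i\<in>J. 2 * (C i * C i))"
    using Zb by (intro mult_left_mono) auto
  also have "\<dots> = M * A^2 / (2*pi^2)"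
    unfolding sum_distrib_left[symmetric] SC Sc by (simp add: field_simps power2_eq_square)
  finally show ?thesis using I2 unfolding A_def by blast
qed


lemma uu_cont: "continuous_on UNIV (\<lambda>p::real\<times>real. uu \<phi> k (fst p) (snd p))"
  unfolding uu_def by (intro continuous_intros)

lemma A_ge:
  fixes \<phi> :: "real \<Rightarrow> real"
  assumes "admissible_cutoff \<phi>"
  shows "(2::real)^k \<le> (\<Sum>n\<in>Sset k. (\<phi> (of_int n / 2^k))^2)"
proof -
  have one: "\<phi> (of_int n / 2^k) = 1" if "n \<in> {0..2^k}" for n :: int
  proof -
    have "0 \<le> real_of_int n" "real_of_int n \<le> 2^k" using that by auto
    then have "\<bar>of_int n / (2^k::real)\<bar> \<le> 1" by (simp add: abs_divide divide_le_eq_1)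
    then show ?thesis using assms unfolding admissible_cutoff_def by blast
  qed
  have "(\<Sum>n\<in>{0..(2::int)^k}. (\<phi> (of_int n / 2^k))^2) \<le> (\<Sum>n\<in>Sset k. (\<phi> (of_int n / 2^k))^2)"
    by (rule sum_mono2) (auto simp: Sset_def)
  moreover have "(\<Sum>n\<in>{0..(2::int)^k}. (\<phi> (of_int n / 2^k))^2) = 2^k + 1"
  proof -
    have "(\<Sum>n\<in>{0..(2::int)^k}. (\<phi> (of_int n / 2^k))^2) = (\<Sum>n\<in>{0..(2::int)^k}. 1)"
      by (rule sum.cong[OF refl]) (simp add: one)
    also have "\<dots> = real (nat (2^k + 1))" by simp
    also have "\<dots> = 2^k + 1" by (simp add: nat_add_distrib)
    finally show ?thesis .
  qed
  ultimately show ?thesis by linarith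
qed

theorem corollary6p3:
  fixes \<phi> :: "real \<Rightarrow> real"
  assumes "admissible_cutoff \<phi>"
  shows "\<forall>T>0. \<exists>\<epsilon>>0. \<exists>c>0. \<forall>k::nat.
    emeasure lborel {(t::real, x::real). t \<in> {0..T} \<and> x \<in> {0..2*pi} \<and>
        cmod (schrod_delta \<phi> (2 ^ k) t x) \<ge> \<epsilon> * sqrt (2 ^ k)} \<ge> ennreal c"
proof (intro allI impI)
  fix T :: real assume T: "T > 0"
  define M where "M = nat \<lceil>T / (2*pi)\<rceil>"
  have TM: "T \<le> 2*pi*M"
  proof -
    have "T / (2*pi) \<le> M" unfolding M_def by linarith
    then show ?thesis by (simp add: field_simps)
  qed
  have M1: "real M > 0" using TM T by (metis mult_zero_right not_le of_nat_0_less_iff gr0I of_nat_0)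
  define \<epsilon> where "\<epsilon> = 1 / (3*pi)"
  define c where "c = T^2 / (8*M)"
  have nn: "\<forall>x. 0 \<le> \<phi> x" using assms by (simp add: admissible_cutoff_def)
  have epos: "\<epsilon> > 0" by (simp add: \<epsilon>_def)
  have cpos: "c > 0" using T M1 by (simp add: c_def)
  have key: "emeasure lborel {(t::real, x::real). t \<in> {0..T} \<and> x \<in> {0..2*pi} \<and>
        cmod (schrod_delta \<phi> (2 ^ k) t x) \<ge> \<epsilon> * sqrt (2 ^ k)} \<ge> ennreal c" for k :: nat
  proof -
    define N :: real where "N = 2^k"
    define A where "A = (\<Sum>n\<in>Sset k. (\<phi> (of_int n / 2^k))^2)"
    have AN: "N \<le> A" unfolding N_def A_def by (rule A_ge[OF assms])
    have Npos: "N > 0" by (simp add: N_def)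
    define B where "B = cbox (0::real,0::real) (T, 2*pi)"
    define B' where "B' = cbox (0::real,0::real) (2*pi*M, 2*pi)"
    define g where "g = (\<lambda>p::real\<times>real. cmod (uu \<phi> k (fst p) (snd p)))"
    define E where "E = {p\<in>B. \<epsilon> * sqrt N \<le> g p}"
    have setE: "{(t::real, x::real). t \<in> {0..T} \<and> x \<in> {0..2*pi} \<and>
        cmod (schrod_delta \<phi> (2 ^ k) t x) \<ge> \<epsilon> * sqrt (2 ^ k)} = E"
      unfolding E_def B_def g_def N_def schrod_eq[OF assms] by (auto simp: cbox_Pair_eq)
    have gcont: "continuous_on UNIV g" unfolding g_def by (intro continuous_intros uu_cont)
    have closedE: "closed E"
      unfolding E_def B_def
      using closed_Collect_le[OF continuous_on_const gcont, of "\<epsilon> * sqrt N"]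
      by (simp add: Collect_conj_eq closed_Int closed_cbox)
    have bE: "bounded E" unfolding E_def B_def by (rule bounded_subset[OF bounded_cbox]) auto
    have EB: "E \<subseteq> B" unfolding E_def by auto
    have fin: "emeasure lborel E < \<infinity>" by (rule emeasure_bounded_finite[OF bE])
    define \<mu> where "\<mu> = measure lborel E"
    have emE: "emeasure lborel E = ennreal \<mu>" unfolding \<mu>_def using fin by (simp add: emeasure_eq_ennreal_measure)
    have IE: "((\<lambda>p. if p \<in> E then 1 else 0) has_integral \<mu>) B"
      unfolding \<mu>_def has_integral_restrict[OF EB]
      by (rule has_integral_measure_lborel[OF borel_closed[OF closedE] fin])
    have I2: "((\<lambda>p. (g p)^2) has_integral (T * A / (2*pi))) B"
      unfolding g_def B_def A_def using L2[of T \<phi> k] T by simp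
    obtain R where R: "((\<lambda>p. (g p)^4) has_integral R) B'" "R \<le> M * A^2 / (2*pi^2)"
      using L4[OF nn, of k M] unfolding g_def B'_def A_def by blast
    have int4: "(\<lambda>p. (g p)^4) integrable_on B"
      unfolding B_def using gcont
      by (intro integrable_continuous continuous_intros) (auto intro: continuous_on_subset)
    define J4 where "J4 = integral B (\<lambda>p. (g p)^4)"
    have J4R: "J4 \<le> R"
    proof -
      have "J4 \<le> integral B' (\<lambda>p. (g p)^4)" unfolding J4_def
        by (rule integral_subset_le) (use int4 R TM in \<open>auto simp: B_def B'_def cbox_Pair_eq has_integral_integrable\<close>)
      then show ?thesis using R(1) by (simp add: integral_unique)
    qed
    define Q where "Q = M * A^2 / (2*pi^2)"
    define I where "I = T * A / (2*pi)"
    have Apos: "A > 0" using AN Npos by linarith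
    have Ipos: "I > 0" unfolding I_def using T Apos by simp
    have Qpos: "Q > 0" unfolding Q_def using M1 Apos by simp
    define sv where "sv = 2 * Q / I"
    have spos: "sv > 0" unfolding sv_def using Qpos Ipos by simp
    define lmb where "lmb = \<epsilon>^2 * N"
    have pw: "(g p)^2 \<le> lmb + (sv/2) * (if p \<in> E then 1 else 0) + (g p)^4 * (1/(2 * sv))" if "p \<in> B" for p
    proof (cases "p \<in> E")
      case True
      have "0 \<le> ((g p)^2 - sv)^2" by simp
      then have "2 * sv * (g p)^2 \<le> sv^2 + (g p)^4" by (simp add: power2_eq_square power4_eq_xxxx algebra_simps)
      then have "(g p)^2 \<le> sv/2 + (g p)^4 * (1/(2 * sv))" using spos by (simp add: field_simps power2_eq_square)
      moreover have "0 \<le> lmb" unfolding lmb_def using Npos by simp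
      ultimately show ?thesis using True by simp
    next
      case False
      then have "g p < \<epsilon> * sqrt N" using that unfolding E_def by auto
      moreover have "0 \<le> g p" unfolding g_def by simp
      ultimately have "(g p)^2 < (\<epsilon> * sqrt N)^2" by (intro power_strict_mono) auto
      also have "\<dots> = lmb" unfolding lmb_def using Npos by (simp add: power_mult_distrib)
      moreover have "0 \<le> (g p)^4 * (1/(2 * sv))" using spos by simp
      ultimately show ?thesis using False by simp
    qed
    have cB: "measure lborel B = T * (2*pi)" unfolding B_def content_Pair using T by simp
    have Ig: "((\<lambda>p. lmb + (sv/2) * (if p \<in> E then 1 else 0) + (g p)^4 * (1/(2 * sv))) has_integral
        (measure lborel B *\<^sub>R lmb + (sv/2) * \<mu> + J4 * (1/(2 * sv)))) B"
      unfolding B_def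
      by (intro has_integral_add has_integral_const has_integral_mult_right has_integral_mult_left)
        (use IE int4 in \<open>auto simp: B_def J4_def\<close>)
    have main: "I \<le> T * (2*pi) * lmb + (sv/2) * \<mu> + J4 * (1/(2 * sv))"
      using has_integral_le[OF I2[folded I_def] Ig pw] cB by simp
    have lamB: "T * (2*pi) * lmb \<le> I / 2"
    proof -
      have "T * (2*pi) * lmb = 2 * T * N / (9 * pi)" unfolding lmb_def \<epsilon>_def by (simp add: field_simps power2_eq_square)
      also have "\<dots> \<le> 2 * T * A / (9 * pi)" using AN T by (simp add: divide_right_mono)
      also have "\<dots> \<le> I / 2" unfolding I_def using T Apos by (simp add: field_simps)
      finally show ?thesis .
    qed
    have J4Q: "J4 * (1/(2 * sv)) \<le> I / 4"
    proof -
      have "J4 * (1/(2 * sv)) \<le> Q * (1/(2 * sv))" 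
      proof (rule mult_right_mono)
        show "J4 \<le> Q" using J4R R(2) unfolding Q_def by linarith
        show "0 \<le> 1 / (2 * sv)" using spos by simp
      qed
      also have "\<dots> = I / 4" unfolding sv_def using Qpos Ipos by (simp add: field_simps)
      finally show ?thesis .
    qed
    have "I / 4 \<le> (sv/2) * \<mu>" using main lamB J4Q by linarith
    then have "I / 4 \<le> (Q / I) * \<mu>" unfolding sv_def by simp
    then have "I * I / (4 * Q) \<le> \<mu>" using Ipos Qpos by (simp add: field_simps)
    moreover have "I * I / (4 * Q) = c"
      unfolding I_def Q_def c_def using Apos M1 by (simp add: field_simps power2_eq_square)
    ultimately have "c \<le> \<mu>" by simp
    then show "emeasure lborel {(t::real, x::real). t \<in> {0..T} \<and> x \<in> {0..2*pi} \<and>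
        cmod (schrod_delta \<phi> (2 ^ k) t x) \<ge> \<epsilon> * sqrt (2 ^ k)} \<ge> ennreal c"
      unfolding setE emE by (simp add: ennreal_leI)
  qed
  show "\<exists>\<epsilon>>0. \<exists>c>0. \<forall>k::nat.
    emeasure lborel {(t::real, x::real). t \<in> {0..T} \<and> x \<in> {0..2*pi} \<and>
        cmod (schrod_delta \<phi> (2 ^ k) t x) \<ge> \<epsilon> * sqrt (2 ^ k)} \<ge> ennreal c"
    using key epos cpos by blast
qed

end
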